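(* Let $k\ge2$ and $n\ge1$. In the position-randomized auction setting described in the context, fix an initial bid sequence $a_1,\dots,a_n$ of ${\mathcal A}$ and a common initial bid sequence $b_1,\dots,b_n$ of the disadvantaged bidders such that $a_i\ne b_j$ for all $i,j$. Let $W_1$ be the expected number of objects ${\mathcal A}$ wins when ${\mathcal A}$ uses the uniform distribution on permutations and the disadvantaged bidders use some (arbitrary, common) distribution on permutations; $W_2$ be the expected number of objects ${\mathcal A}$ wins when ${\mathcal A}$ does not permute his initial sequence (bids $a_i$ on object $i$) and the disadvantaged bidders use the uniform distribution; $W_3$ be the expected number of objects ${\mathcal A}$ wins when ${\mathcal A}$ uses an arbitrary given distribution on permutations and the disadvantaged bidders use the uniform distribution. Then $W_1\ge W_2=W_3$.
   Context: Auction model: there are $k$ bidders, one adversary ${\mathcal A}$ and $k-1$ disadvantaged bidders, and $n$ objects auctioned simultaneously. Each object is won by the highest bidder on it; if $m$ bidders tie for the highest bid, each wins with probability $1/m$. A position-randomized bidding algorithm: a bidder chooses an initial sequence $x_1,\dots,x_n$ of positive reals (with $\sum x_j\le1$) and a probability distribution on permutations $\sigma$ of $\{1,\dots,n\}$; he draws $\sigma$ and bids $x_j$ on object $\sigma(j)$. All disadvantaged bidders use the same initial sequence and the same permutation distribution, drawing their permutations independently of each other; ${\mathcal A}$'s permutation is drawn independently of theirs. *)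

theory Defs
  imports "HOL-Probability.Probability"
begin

text \<open>A bidder with initial
 sequence x and permutation s bids x i on object s i, i.e. bids x (inv s j) on object j.\<close>

definition valid_seq :: "nat \<Rightarrow> (nat \<Rightarrow> real) \<Rightarrow> bool" where
  "valid_seq n x \<longleftrightarrow> (\<forall>i<n. x i > 0) \<and> (\<Sum>i<n. x i) \<le> 1"

definition perm_dist :: "nat \<Rightarrow> (nat \<Rightarrow> nat) pmf \<Rightarrow> bool" where
  "perm_dist n P \<longleftrightarrow> set_pmf P \<subseteq> {s. s permutes {..<n}}"

definition uniform_perms :: "nat \<Rightarrow> (nat \<Rightarrow> nat) pmf" where
  "uniform_perms n = pmf_of_set {s. s permutes {..<n}}"

definition bid_on :: "(nat \<Rightarrow> real) \<Rightarrow> (nat \<Rightarrow> nat) \<Rightarrow> nat \<Rightarrow> real" where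
  "bid_on x s j = x (inv s j)"

text \<open>Probability that the adversary (bid x) wins an object on which the m disadvantaged
 bidders bid y 0, ..., y (m-1): highest bid wins, ties broken uniformly.\<close>
definition win_share :: "real \<Rightarrow> (nat \<Rightarrow> real) \<Rightarrow> nat \<Rightarrow> real" where
  "win_share x y m = (if \<exists>l<m. y l > x then 0
       else 1 / (1 + real (card {l. l < m \<and> y l = x})))"

definition expected_wins ::
  "nat \<Rightarrow> nat \<Rightarrow> (nat \<Rightarrow> real) \<Rightarrow> (nat \<Rightarrow> real) \<Rightarrow> (nat \<Rightarrow> nat) pmf \<Rightarrow> (nat \<Rightarrow> nat) pmf \<Rightarrow> real" where
  "expected_wins k n a b P Q =
     measure_pmf.expectation (pair_pmf P (Pi_pmf {..<k-1} id (\<lambda>_. Q)))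
       (\<lambda>(s, t). \<Sum>j<n. win_share (bid_on a s j) (\<lambda>l. bid_on b (t l) j) (k-1))"

end

theory Submission
  imports Defs "HOL-Combinatorics.Permutations"
begin

lemma ws_nt:
  assumes "\<forall>l<m. y l \<noteq> x"
  shows "win_share x y m = (\<Prod>l<m. if y l < x then 1 else 0)"
proof (cases "\<exists>l<m. y l > x")
  case True
  then obtain l where "l < m" "y l > x" by blast
  then have "(\<Prod>l<m. if y l < x then 1 else (0::real)) = 0"
    by (subst prod_zero_iff) (use \<open>l < m\<close> \<open>y l > x\<close> in \<open>auto intro!: bexI[of _ l]\<close>)
  then show ?thesis using True by (simp add: win_share_def)
next
  case False
  then have "\<forall>l<m. y l < x" using assms by (meson linorder_neqE_linordered_idom)
  moreover have "{l. l < m \<and> y l = x} = {}" using assms by auto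
  ultimately show ?thesis using False by (simp add: win_share_def)
qed

lemma exp_pair:
  fixes h :: "'a \<times> 'b \<Rightarrow> real"
  assumes "finite (set_pmf P)" "finite (set_pmf R)"
  shows "measure_pmf.expectation (pair_pmf P R) h =
         measure_pmf.expectation P (\<lambda>s. measure_pmf.expectation R (\<lambda>t. h (s, t)))"
proof -
  have "measure_pmf.expectation (pair_pmf P R) h = (\<Sum>x\<in>set_pmf P \<times> set_pmf R. pmf (pair_pmf P R) x * h x)"
    by (subst integral_measure_pmf[of "set_pmf P \<times> set_pmf R"]) (use assms in auto)
  also have "\<dots> = (\<Sum>s\<in>set_pmf P. \<Sum>t\<in>set_pmf R. pmf P s * (pmf R t * h (s,t)))"
    unfolding sum.cartesian_product by (intro sum.cong) (auto simp: pmf_pair)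
  also have "\<dots> = (\<Sum>s\<in>set_pmf P. pmf P s * measure_pmf.expectation R (\<lambda>t. h (s, t)))"
    by (intro sum.cong refl, subst integral_measure_pmf[of "set_pmf R"]) (use assms in \<open>auto simp: sum_distrib_left\<close>)
  also have "\<dots> = measure_pmf.expectation P (\<lambda>s. measure_pmf.expectation R (\<lambda>t. h (s, t)))"
    by (subst integral_measure_pmf[of "set_pmf P"]) (use assms in auto)
  finally show ?thesis .
qed

lemma unif_sum:
  fixes f :: "nat \<Rightarrow> real"
  assumes "j < n"
  shows "real n * (\<Sum>s\<in>{s. s permutes {..<n}}. f (inv s j)) = real (fact n) * (\<Sum>i<n. f i)"
proof -
  let ?S = "{s. s permutes {..<n}}"
  have fin: "finite ?S" by (simp add: finite_permutations)
  have 1: "(\<Sum>s\<in>?S. f (inv s j)) = (\<Sum>s\<in>?S. f (s j))"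
    by (subst sum_permutations_inverse) (auto intro!: sum.cong simp: permutes_inv_inv)
  have 2: "(\<Sum>s\<in>?S. f (s j')) = (\<Sum>s\<in>?S. f (s j))" if "j' < n" for j'
    by (rule sum.reindex_bij_witness[where i="\<lambda>s. s \<circ> Transposition.transpose j j'" and j="\<lambda>s. s \<circ> Transposition.transpose j j'"])
       (use assms that in \<open>auto simp: comp_assoc intro!: permutes_compose permutes_swap_id\<close>)
  have "real n * (\<Sum>s\<in>?S. f (s j)) = (\<Sum>j'<n. \<Sum>s\<in>?S. f (s j'))"
    using 2 by simp
  also have "\<dots> = (\<Sum>s\<in>?S. \<Sum>j'<n. f (s j'))" by (rule sum.swap)
  also have "\<dots> = (\<Sum>s\<in>?S. \<Sum>i<n. f i)"
  proof (rule sum.cong[OF refl])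
    fix s assume "s \<in> ?S"
    then have "s permutes {..<n}" by simp
    from sum.permute[OF this, of f] show "(\<Sum>j'<n. f (s j')) = (\<Sum>i<n. f i)" by (simp add: comp_def)
  qed
  also have "\<dots> = real (fact n) * (\<Sum>i<n. f i)"
    by (simp add: card_permutations)
  finally show ?thesis using 1 by simp
qed

lemma exp_cong:
  fixes f g :: "'a \<Rightarrow> real"
  shows "(\<And>x. x \<in> set_pmf p \<Longrightarrow> f x = g x) \<Longrightarrow> measure_pmf.expectation p f = measure_pmf.expectation p g"
  by (rule integral_cong_AE) (auto simp: AE_measure_pmf_iff)

lemma fin_perm_dist: "perm_dist n P \<Longrightarrow> finite (set_pmf P)"
  unfolding perm_dist_def using finite_permutations[of "{..<n}"] by (auto intro: finite_subset)

lemma exp_prod_pow: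
  fixes g :: "'b \<Rightarrow> real"
  assumes "finite (set_pmf Q)" "\<And>u. g u \<ge> 0"
  shows "measure_pmf.expectation (Pi_pmf {..<m} d (\<lambda>_. Q)) (\<lambda>t. \<Prod>l<m. g (t l)) = (measure_pmf.expectation Q g) ^ m"
proof -
  have "measure_pmf.expectation (Pi_pmf {..<m} d (\<lambda>_. Q)) (\<lambda>t. \<Prod>l\<in>{..<m}. (\<lambda>_. g) l (t l)) = 
     (\<Prod>l\<in>{..<m}. measure_pmf.expectation ((\<lambda>_. Q) l) ((\<lambda>_. g) l))"
    by (rule expectation_prod_Pi_pmf) (auto intro: integrable_measure_pmf_finite assms)
  then show ?thesis by simp
qed
lemma ew_formula:
  assumes "perm_dist n P" "perm_dist n Q" "\<forall>i<n. \<forall>j<n. a i \<noteq> b j"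
  shows "expected_wins k n a b P Q = measure_pmf.expectation P (\<lambda>s. \<Sum>j<n.
     (measure_pmf.expectation Q (\<lambda>u. if b (inv u j) < a (inv s j) then 1 else 0)) ^ (k-1))"
proof -
  let ?R = "Pi_pmf {..<k-1} id (\<lambda>_. Q)"
  have finR: "finite (set_pmf ?R)"
    by (rule finite_subset[OF set_Pi_pmf_subset']) (use fin_perm_dist[OF assms(2)] in auto)
  have setR: "t l \<in> set_pmf Q" if "t \<in> set_pmf ?R" "l < k-1" for t l
    using that by (auto simp: set_Pi_pmf PiE_dflt_def)
  have inv_lt: "inv s j < n" if "s \<in> set_pmf P \<or> s \<in> set_pmf Q" "j < n" for s j
  proof -
    have "s permutes {..<n}" using that assms(1,2) by (auto simp: perm_dist_def)
    then have "inv s permutes {..<n}" by (rule permutes_inv)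
    then show ?thesis using that(2) permutes_in_image[of "inv s" "{..<n}" j] by simp
  qed
  show ?thesis
    unfolding expected_wins_def
    apply (subst exp_pair[OF fin_perm_dist[OF assms(1)] finR])
  proof (rule exp_cong)
    fix s assume s: "s \<in> set_pmf P"
    have "measure_pmf.expectation ?R (\<lambda>t. \<Sum>j<n. win_share (bid_on a s j) (\<lambda>l. bid_on b (t l) j) (k - 1))
       = (\<Sum>j<n. measure_pmf.expectation ?R (\<lambda>t. win_share (bid_on a s j) (\<lambda>l. bid_on b (t l) j) (k - 1)))"
      by (intro Bochner_Integration.integral_sum integrable_measure_pmf_finite finR)
    also have "\<dots> = (\<Sum>j<n. measure_pmf.expectation ?R (\<lambda>t. \<Prod>l<k-1. 
          (if b (inv (t l) j) < a (inv s j) then 1 else 0)))"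
    proof (rule sum.cong[OF refl], rule exp_cong)
      fix j t assume j: "j \<in> {..<n}" and t: "t \<in> set_pmf ?R"
      have "\<forall>l<k-1. bid_on b (t l) j \<noteq> bid_on a s j"
      proof (intro allI impI)
        fix l assume "l < k-1"
        then have "inv (t l) j < n" using inv_lt setR[OF t] j by auto
        moreover have "inv s j < n" using inv_lt s j by auto
        ultimately show "bid_on b (t l) j \<noteq> bid_on a s j" using assms(3) unfolding bid_on_def by metis
      qed
      then show "win_share (bid_on a s j) (\<lambda>l. bid_on b (t l) j) (k - 1) = 
          (\<Prod>l<k-1. (if b (inv (t l) j) < a (inv s j) then 1 else 0))"
        by (subst ws_nt) (auto simp: bid_on_def)
    qed
    also have "\<dots> = (\<Sum>j<n. (measure_pmf.expectation Q (\<lambda>u. if b (inv u j) < a (inv s j) then 1 else 0)) ^ (k-1))"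
    proof (rule sum.cong[OF refl])
      fix j
      show "measure_pmf.expectation ?R (\<lambda>t. \<Prod>l<k-1. 
          (if b (inv (t l) j) < a (inv s j) then (1::real) else 0)) =
        (measure_pmf.expectation Q (\<lambda>u. if b (inv u j) < a (inv s j) then 1 else 0)) ^ (k-1)"
        by (rule exp_prod_pow) (use fin_perm_dist[OF assms(2)] in auto)
    qed
    finally show "measure_pmf.expectation ?R (\<lambda>t. case (s, t) of (s, t) \<Rightarrow> \<Sum>j<n. win_share (bid_on a s j) (\<lambda>l. bid_on b (t l) j) (k - 1)) =
      (\<Sum>j<n. (measure_pmf.expectation Q (\<lambda>u. if b (inv u j) < a (inv s j) then 1 else 0)) ^ (k-1))"
      by simp
  qed
qed

lemma unif_exp:
  fixes f :: "nat \<Rightarrow> real"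
  assumes "j < n"
  shows "measure_pmf.expectation (uniform_perms n) (\<lambda>u. f (inv u j)) = (\<Sum>i<n. f i) / real n"
proof -
  let ?S = "{s. s permutes {..<n}}"
  have fin: "finite ?S" by (simp add: finite_permutations)
  have ne: "?S \<noteq> {}" using permutes_id by blast
  have c: "card ?S = fact n" by (simp add: card_permutations)
  have "measure_pmf.expectation (uniform_perms n) (\<lambda>u. f (inv u j)) = (\<Sum>u\<in>?S. f (inv u j)) / real (fact n)"
    unfolding uniform_perms_def using fin ne c by (simp add: integral_pmf_of_set)
  also have "\<dots> = (\<Sum>i<n. f i) / real n"
    using unif_sum[OF assms, of f] assms by (simp add: field_simps)
  finally show ?thesis .
qed

lemma perm_dist_unif: "perm_dist n (uniform_perms n)"
  unfolding perm_dist_def uniform_perms_def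
  by (subst set_pmf_of_set) (auto simp: finite_permutations intro: permutes_id)

lemma perm_dist_id: "perm_dist n (return_pmf id)"
  unfolding perm_dist_def by (auto intro: permutes_id)

lemma convex_pow: "convex_on {0::real..} (\<lambda>x. x ^ m)"
proof (cases "even m")
  case True
  show ?thesis by (rule convex_on_subset[OF convex_power_even[OF True]]) auto
next
  case False
  then show ?thesis by (rule convex_power_odd)
qed

lemma jensen_pow:
  fixes q :: "nat \<Rightarrow> real"
  assumes "n \<ge> 1" "\<And>j. j < n \<Longrightarrow> q j \<ge> 0"
  shows "((\<Sum>j<n. q j) / real n) ^ m \<le> (\<Sum>j<n. q j ^ m) / real n"
proof -
  have "(\<lambda>x. x ^ m) (\<Sum>j\<in>{..<n}. (1 / real n) *\<^sub>R q j) \<le> (\<Sum>j\<in>{..<n}. (1 / real n) * (\<lambda>x. x ^ m) (q j))"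
    by (rule convex_on_sum[OF _ _ convex_pow]) (use assms in \<open>auto simp: lessThan_empty_iff\<close>)
  then show ?thesis by (simp add: sum_divide_distrib[symmetric] sum_distrib_left[symmetric])
qed

lemma sum_inv_perm:
  fixes g :: "nat \<Rightarrow> real"
  assumes "s permutes {..<n}"
  shows "(\<Sum>j<n. g (inv s j)) = (\<Sum>i<n. g i)"
  using sum.permute[OF permutes_inv[OF assms], of g] by (simp add: comp_def)

theorem lemma4p1:
  fixes k n :: nat and a b :: "nat \<Rightarrow> real" and P Q :: "(nat \<Rightarrow> nat) pmf"
  assumes "k \<ge> 2" and "n \<ge> 1"
    and "valid_seq n a" and "valid_seq n b"
    and "\<forall>i<n. \<forall>j<n. a i \<noteq> b j"
    and "perm_dist n P" and "perm_dist n Q"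
  shows "expected_wins k n a b (uniform_perms n) Q \<ge> expected_wins k n a b (return_pmf id) (uniform_perms n)
       \<and> expected_wins k n a b (return_pmf id) (uniform_perms n) = expected_wins k n a b P (uniform_perms n)"
proof -
  define U where "U = uniform_perms n"
  define p where "p x = (\<Sum>i<n. if b i < x then 1 else 0::real) / real n" for x
  define T where "T = (\<Sum>i<n. p (a i) ^ (k-1))"
  have qU: "measure_pmf.expectation U (\<lambda>u. if b (inv u j) < x then (1::real) else 0) = p x" if "j < n" for j x
    unfolding U_def p_def using unif_exp[OF that, of "\<lambda>i. if b i < x then 1 else 0"] by simp
  have W2: "expected_wins k n a b (return_pmf id) U = T"
    unfolding U_def ew_formula[OF perm_dist_id perm_dist_unif assms(5)] T_def
    by (simp, intro sum.cong refl) (simp add: qU[unfolded U_def])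
  have W3: "expected_wins k n a b P U = T"
  proof -
    have "expected_wins k n a b P U = measure_pmf.expectation P (\<lambda>s. T)"
      unfolding U_def ew_formula[OF assms(6) perm_dist_unif assms(5)]
    proof (rule exp_cong)
      fix s assume "s \<in> set_pmf P"
      then have sp: "s permutes {..<n}" using assms(6) by (auto simp: perm_dist_def)
      have "(\<Sum>j<n. measure_pmf.expectation (uniform_perms n) (\<lambda>u. if b (inv u j) < a (inv s j) then (1::real) else 0) ^ (k - 1))
         = (\<Sum>j<n. p (a (inv s j)) ^ (k-1))"
        by (intro sum.cong refl) (simp add: qU[unfolded U_def])
      also have "\<dots> = T" unfolding T_def by (rule sum_inv_perm[OF sp, of "\<lambda>i. p (a i) ^ (k-1)"])
      finally show "(\<Sum>j<n. measure_pmf.expectation (uniform_perms n) (\<lambda>u. if b (inv u j) < a (inv s j) then (1::real) else 0) ^ (k - 1)) = T" .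
    qed
    then show ?thesis by simp
  qed
  define q where "q j x = measure_pmf.expectation Q (\<lambda>u. if b (inv u j) < x then (1::real) else 0)" for j x
  have finQ: "finite (set_pmf Q)" by (rule fin_perm_dist[OF assms(7)])
  have finU: "finite (set_pmf U)" unfolding U_def by (rule fin_perm_dist[OF perm_dist_unif])
  have qnn: "q j x \<ge> 0" for j x unfolding q_def by (intro integral_nonneg_AE) auto
  have qsum: "(\<Sum>j<n. q j x) / real n = p x" for x
  proof -
    have "(\<Sum>j<n. q j x) = measure_pmf.expectation Q (\<lambda>u. \<Sum>j<n. if b (inv u j) < x then (1::real) else 0)"
      unfolding q_def by (intro Bochner_Integration.integral_sum[symmetric] integrable_measure_pmf_finite finQ)
    also have "\<dots> = measure_pmf.expectation Q (\<lambda>u. \<Sum>i<n. if b i < x then (1::real) else 0)"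
    proof (rule exp_cong)
      fix u assume "u \<in> set_pmf Q"
      then have sp: "u permutes {..<n}" using assms(7) by (auto simp: perm_dist_def)
      show "(\<Sum>j<n. if b (inv u j) < x then (1::real) else 0) = (\<Sum>i<n. if b i < x then (1::real) else 0)"
        by (rule sum_inv_perm[OF sp, of "\<lambda>i. if b i < x then 1 else 0"])
    qed
    also have "\<dots> = (\<Sum>i<n. if b i < x then (1::real) else 0)" by simp
    finally show ?thesis unfolding p_def by simp
  qed
  have "expected_wins k n a b U Q = measure_pmf.expectation U (\<lambda>s. \<Sum>j<n. q j (a (inv s j)) ^ (k-1))"
    unfolding U_def ew_formula[OF perm_dist_unif assms(7) assms(5)] q_def ..
  also have "\<dots> = (\<Sum>j<n. measure_pmf.expectation U (\<lambda>s. q j (a (inv s j)) ^ (k-1)))"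
    by (intro Bochner_Integration.integral_sum integrable_measure_pmf_finite finU)
  also have "\<dots> = (\<Sum>j<n. (\<Sum>i<n. q j (a i) ^ (k-1)) / real n)"
  proof (rule sum.cong[OF refl])
    fix j assume "j \<in> {..<n}"
    then show "measure_pmf.expectation U (\<lambda>s. q j (a (inv s j)) ^ (k-1)) = (\<Sum>i<n. q j (a i) ^ (k-1)) / real n"
      using unif_exp[of j n "\<lambda>i. q j (a i) ^ (k-1)"] by (simp add: U_def)
  qed
  also have "\<dots> = (\<Sum>i<n. (\<Sum>j<n. q j (a i) ^ (k-1)) / real n)"
    unfolding sum_divide_distrib by (rule sum.swap)
  also have "\<dots> \<ge> (\<Sum>i<n. ((\<Sum>j<n. q j (a i)) / real n) ^ (k-1))"
    by (intro sum_mono jensen_pow assms(2) qnn)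
  finally have W1: "expected_wins k n a b U Q \<ge> T" unfolding T_def qsum .
  show ?thesis using W1 W2 W3 unfolding U_def by simp
qed

end
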